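(* Let $G$ be an almost hypohamiltonian graph with exceptional vertex $w$, and let $M$ be a $3$-edge-cut in $G$ (a set of three edges whose removal disconnects $G$). Then $G - M$ has exactly two components $A_1$ and $A_2$, with $A_1 \cong K_1$ and $A_2 \not\cong K_1$. In particular, almost hypohamiltonian graphs are cyclically $4$-edge-connected.
   Context: All graphs are finite, undirected, connected, without loops or multiple edges. A graph is hamiltonian if it has a cycle through all its vertices. A non-hamiltonian graph $G$ is almost hypohamiltonian if there exists a vertex $w$ (the exceptional vertex) such that $G - w$ is non-hamiltonian and $G - v$ is hamiltonian for every vertex $v \neq w$. A graph is cyclically $4$-edge-connected if no edge set of size less than $4$ separates it into two components each containing a cycle. *)

theory Defs
  imports Main
begin

definition simple_graph :: "'a set \<Rightarrow> 'a set set \<Rightarrow> bool" where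
  "simple_graph V E \<longleftrightarrow> finite V \<and>
     (\<forall>e\<in>E. \<exists>u v. e = {u, v} \<and> u \<noteq> v \<and> u \<in> V \<and> v \<in> V)"

definition reachable :: "'a set \<Rightarrow> 'a set set \<Rightarrow> 'a \<Rightarrow> 'a \<Rightarrow> bool" where
  "reachable V E u v \<longleftrightarrow> u \<in> V \<and> v \<in> V \<and>
     (u, v) \<in> {(x, y). x \<in> V \<and> y \<in> V \<and> {x, y} \<in> E}\<^sup>*"

definition connected_graph :: "'a set \<Rightarrow> 'a set set \<Rightarrow> bool" where
  "connected_graph V E \<longleftrightarrow> V \<noteq> {} \<and> (\<forall>u\<in>V. \<forall>v\<in>V. reachable V E u v)"

definition components :: "'a set \<Rightarrow> 'a set set \<Rightarrow> 'a set set" where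
  "components V E = {{v. reachable V E u v} | u. u \<in> V}"

definition is_cycle :: "'a set set \<Rightarrow> 'a list \<Rightarrow> bool" where
  "is_cycle E vs \<longleftrightarrow> length vs \<ge> 3 \<and> distinct vs \<and>
     (\<forall>i < length vs. {vs ! i, vs ! ((i + 1) mod length vs)} \<in> E)"

definition hamiltonian :: "'a set \<Rightarrow> 'a set set \<Rightarrow> bool" where
  "hamiltonian V E \<longleftrightarrow> (\<exists>vs. is_cycle E vs \<and> set vs = V)"

definition del_vertex_V :: "'a set \<Rightarrow> 'a \<Rightarrow> 'a set" where
  "del_vertex_V V v = V - {v}"

definition del_vertex_E :: "'a set set \<Rightarrow> 'a \<Rightarrow> 'a set set" where
  "del_vertex_E E v = {e \<in> E. v \<notin> e}"

definition almost_hypohamiltonian :: "'a set \<Rightarrow> 'a set set \<Rightarrow> 'a \<Rightarrow> bool" where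
  "almost_hypohamiltonian V E w \<longleftrightarrow>
     simple_graph V E \<and> connected_graph V E \<and> \<not> hamiltonian V E \<and> w \<in> V \<and>
     \<not> hamiltonian (del_vertex_V V w) (del_vertex_E E w) \<and>
     (\<forall>v\<in>V. v \<noteq> w \<longrightarrow> hamiltonian (del_vertex_V V v) (del_vertex_E E v))"

definition contains_cycle :: "'a set \<Rightarrow> 'a set set \<Rightarrow> bool" where
  "contains_cycle C E \<longleftrightarrow> (\<exists>vs. is_cycle E vs \<and> set vs \<subseteq> C)"

definition cyclically_4_edge_connected :: "'a set \<Rightarrow> 'a set set \<Rightarrow> bool" where
  "cyclically_4_edge_connected V E \<longleftrightarrow>
     (\<forall>F \<subseteq> E. card F < 4 \<longrightarrow>
        \<not> (\<exists>C1 C2. components V (E - F) = {C1, C2} \<and> C1 \<noteq> C2 \<and>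
                   contains_cycle C1 (E - F) \<and> contains_cycle C2 (E - F)))"

end

theory Submission
  imports Defs
begin


fun pth :: "'a set set \<Rightarrow> 'a list \<Rightarrow> bool" where
  "pth E (x # y # xs) = ({x,y} \<in> E \<and> pth E (y # xs))"
| "pth E _ = True"

fun ch :: "('a \<Rightarrow> bool) \<Rightarrow> 'a list \<Rightarrow> nat" where
  "ch s (x # y # xs) = (if s x \<noteq> s y then 1 else 0) + ch s (y # xs)"
| "ch s _ = 0"

fun chE :: "('a \<Rightarrow> bool) \<Rightarrow> 'a list \<Rightarrow> 'a set set" where
  "chE s (x # y # xs) = (if s x \<noteq> s y then {{x,y}} else {}) \<union> chE s (y # xs)"
| "chE s _ = {}"

lemma pth_nth: "pth E xs \<longleftrightarrow> (\<forall>i. Suc i < length xs \<longrightarrow> {xs!i, xs!Suc i} \<in> E)"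
proof (induction E xs rule: pth.induct)
  case (1 E x y xs)
  show ?case
  proof
    assume "pth E (x # y # xs)"
    then show "\<forall>i. Suc i < length (x # y # xs) \<longrightarrow> {(x # y # xs) ! i, (x # y # xs) ! Suc i} \<in> E"
      using 1 by (auto simp: nth_Cons split: nat.splits)
  next
    assume H: "\<forall>i. Suc i < length (x # y # xs) \<longrightarrow> {(x # y # xs) ! i, (x # y # xs) ! Suc i} \<in> E"
    have "{x,y} \<in> E" using H[rule_format, of 0] by simp
    moreover have "\<forall>i. Suc i < length (y # xs) \<longrightarrow> {(y # xs) ! i, (y # xs) ! Suc i} \<in> E"
      using H[rule_format, of "Suc _"] by auto
    ultimately show "pth E (x # y # xs)" using 1 by simp
  qed
qed (auto simp: less_Suc_eq_0_disj)

lemma pth_append: "pth E (xs @ ys) \<longleftrightarrow> pth E xs \<and> pth E ys \<and> (xs \<noteq> [] \<and> ys \<noteq> [] \<longrightarrow> {last xs, hd ys} \<in> E)"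
proof (induction xs)
  case Nil then show ?case by simp
next
  case (Cons x xs)
  then show ?case by (cases xs; cases ys) auto
qed

lemma pth_rev: "pth E (rev xs) \<longleftrightarrow> pth E xs"
proof (induction xs)
  case Nil then show ?case by simp
next
  case (Cons x xs)
  then show ?case by (cases xs) (auto simp: pth_append insert_commute)
qed

lemma pth_mono: "pth E xs \<Longrightarrow> E \<subseteq> E' \<Longrightarrow> pth E' xs"
  by (induction E xs rule: pth.induct) auto

lemma is_cycle_iff: "is_cycle E vs \<longleftrightarrow> 3 \<le> length vs \<and> distinct vs \<and> pth E vs \<and> {last vs, hd vs} \<in> E"
proof
  assume H: "is_cycle E vs"
  then have L: "3 \<le> length vs" "distinct vs" and A: "\<forall>i < length vs. {vs ! i, vs ! ((i + 1) mod length vs)} \<in> E"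
    by (auto simp: is_cycle_def)
  have "pth E vs" unfolding pth_nth
  proof (intro allI impI)
    fix i assume "Suc i < length vs"
    then show "{vs!i, vs!Suc i} \<in> E" using A[rule_format, of i] by simp
  qed
  moreover have "{last vs, hd vs} \<in> E"
  proof -
    have "length vs - 1 < length vs" using L by simp
    moreover have "(length vs - 1 + 1) mod length vs = 0"
    proof -
      have "length vs - 1 + 1 = length vs" using L by simp
      then show ?thesis by simp
    qed
    ultimately have "{vs ! (length vs - 1), vs ! 0} \<in> E" using A by metis
    moreover have "vs \<noteq> []" using L by auto
    ultimately show ?thesis by (simp add: last_conv_nth hd_conv_nth)
  qed
  ultimately show "3 \<le> length vs \<and> distinct vs \<and> pth E vs \<and> {last vs, hd vs} \<in> E" using L by simp
next
  assume H: "3 \<le> length vs \<and> distinct vs \<and> pth E vs \<and> {last vs, hd vs} \<in> E"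
  have "\<forall>i < length vs. {vs ! i, vs ! ((i + 1) mod length vs)} \<in> E"
  proof (intro allI impI)
    fix i assume i: "i < length vs"
    show "{vs ! i, vs ! ((i + 1) mod length vs)} \<in> E"
    proof (cases "Suc i < length vs")
      case True then show ?thesis using H by (simp add: pth_nth)
    next
      case False
      then have si: "Suc i = length vs" using i by simp
      then have "i = length vs - 1" "(i + 1) mod length vs = 0" by auto
      moreover have "vs \<noteq> []" using i by auto
      ultimately show ?thesis using H by (simp add: last_conv_nth hd_conv_nth)
    qed
  qed
  then show "is_cycle E vs" using H by (simp add: is_cycle_def)
qed

lemma ch_parity: "xs \<noteq> [] \<Longrightarrow> ch s xs mod 2 = (if s (hd xs) \<noteq> s (last xs) then 1 else 0)"
proof (induction s xs rule: ch.induct)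
  case (1 s x y xs)
  have IH: "ch s (y#xs) mod 2 = (if s y \<noteq> s (last (y#xs)) then 1 else 0)" using 1 by simp
  show ?case
  proof (cases "s x = s y")
    case True then show ?thesis using IH by simp
  next
    case False then show ?thesis using IH by (simp add: mod_Suc)
  qed
qed auto

lemma ch0: "ch s xs = 0 \<Longrightarrow> (\<forall>z\<in>set xs. s z = s (hd xs)) \<and> chE s xs = {}"
proof (induction s xs rule: ch.induct)
  case (1 s x y xs)
  have sxy: "s x = s y" and c: "ch s (y#xs) = 0" using 1(2) by (auto split: if_splits)
  have H: "\<forall>z\<in>set (y#xs). s z = s y" and H2: "chE s (y#xs) = {}" using 1(1)[OF c] by auto
  show ?case
  proof (intro conjI ballI)
    fix z assume "z \<in> set (x#y#xs)"
    then have "z = x \<or> z \<in> set (y#xs)" by simp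
    then show "s z = s (hd (x#y#xs))" using H sxy by (metis list.sel(1))
  next
    show "chE s (x # y # xs) = {}" using H2 sxy by simp
  qed
qed auto

lemma chSuc: "ch s xs = Suc k \<Longrightarrow> \<exists>p r. xs = p @ r \<and> p \<noteq> [] \<and> r \<noteq> [] \<and> (\<forall>z\<in>set p. s z = s (hd xs))
   \<and> s (hd r) \<noteq> s (hd xs) \<and> ch s r = k \<and> chE s xs = insert {last p, hd r} (chE s r)"
proof (induction s xs arbitrary: k rule: ch.induct)
  case (1 s x y xs)
  show ?case
  proof (cases "s x \<noteq> s y")
    case True
    then have "x # y # xs = [x] @ (y#xs) \<and> [x] \<noteq> [] \<and> (y#xs) \<noteq> [] \<and> (\<forall>z\<in>set [x]. s z = s (hd (x#y#xs)))
   \<and> s (hd (y#xs)) \<noteq> s (hd (x#y#xs)) \<and> ch s (y#xs) = k \<and> chE s (x#y#xs) = insert {last [x], hd (y#xs)} (chE s (y#xs))"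
      using 1(2) by simp
    then show ?thesis by blast
  next
    case False
    then have c: "ch s (y # xs) = Suc k" using 1(2) by simp
    from 1(1)[OF c] obtain p r where pr: "y # xs = p @ r" "p \<noteq> []" "r \<noteq> []"
      "\<forall>z\<in>set p. s z = s (hd (y#xs))" "s (hd r) \<noteq> s (hd (y#xs))" "ch s r = k"
      "chE s (y#xs) = insert {last p, hd r} (chE s r)" by blast
    have a: "x # y # xs = (x # p) @ r" using pr(1) by simp
    have b: "\<forall>z\<in>set (x # p). s z = s (hd (x#y#xs))" using pr(4) False by (metis list.sel(1) set_ConsD)
    have d: "s (hd r) \<noteq> s (hd (x#y#xs))" using pr(5) False by simp
    have e: "chE s (x#y#xs) = insert {last (x#p), hd r} (chE s r)" using pr(7) pr(2) False by simp
    show ?thesis using a b d e pr(2,3,6) by blast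
  qed
qed auto
lemma chE_sub: "e \<in> chE s xs \<Longrightarrow> e \<subseteq> set xs"
  by (induction s xs rule: ch.induct) (auto split: if_splits)

lemma chE_form: "e \<in> chE s xs \<Longrightarrow> \<exists>ys a b zs. xs = ys @ a # b # zs \<and> e = {a,b} \<and> s a \<noteq> s b"
proof (induction s xs rule: ch.induct)
  case (1 s x y xs)
  show ?case
  proof (cases "e \<in> chE s (y # xs)")
    case True
    then obtain ys a b zs where "y # xs = ys @ a # b # zs \<and> e = {a,b} \<and> s a \<noteq> s b" using 1 by blast
    then show ?thesis by (intro exI[of _ "x # ys"]) auto
  next
    case False
    then show ?thesis using 1(2) by (intro exI[of _ "[]"]) (auto split: if_splits)
  qed
qed auto

lemma chE_pth: "e \<in> chE s xs \<Longrightarrow> pth E xs \<Longrightarrow> e \<in> E"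
  by (induction s xs rule: ch.induct) (auto split: if_splits)

lemma chE_card: "distinct xs \<Longrightarrow> card (chE s xs) = ch s xs \<and> finite (chE s xs)"
proof (induction s xs rule: ch.induct)
  case (1 s x y xs)
  have "{x,y} \<notin> chE s (y # xs)" using chE_sub[of "{x,y}" s "y#xs"] 1(2) by auto
  then show ?case using 1 by auto
qed auto

lemma wrap_notin: "distinct xs \<Longrightarrow> 3 \<le> length xs \<Longrightarrow> {last xs, hd xs} \<notin> chE s xs"
proof
  assume d: "distinct xs" and l: "3 \<le> length xs" and "{last xs, hd xs} \<in> chE s xs"
  then obtain ys a b zs where eq: "xs = ys @ a # b # zs" "{last xs, hd xs} = {a,b}" using chE_form by metis
  have la: "last xs = last (b # zs)" using eq by simp
  have "last (b#zs) \<in> set (b # zs)" by simp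
  then have "last xs \<noteq> a" using d eq la by auto
  then have "last xs = b" "hd xs = a" using eq by (auto simp: doubleton_eq_iff)
  then have "ys = []"
    using d eq by (cases ys) auto
  moreover have "zs = []"
  proof (rule ccontr)
    assume "zs \<noteq> []"
    then have "last zs = b" using \<open>last xs = b\<close> eq by simp
    then have "b \<in> set zs" using \<open>zs \<noteq> []\<close> by auto
    then show False using d eq by auto
  qed
  ultimately show False using l eq by simp
qed



lemma cycle_cross:
  assumes cyc: "is_cycle E vs" and S: "set vs = S"
    and ex1: "\<exists>x\<in>S. s x" and ex2: "\<exists>x\<in>S. \<not> s x"
  shows "\<exists>U. U \<subseteq> E \<and> finite U \<and> 1 \<le> card U \<and> even (card U) \<and>
      (\<forall>e\<in>U. \<exists>a b. e = {a,b} \<and> a \<in> S \<and> b \<in> S \<and> s a \<and> \<not> s b) \<and>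
      (card U = 2 \<longrightarrow> (\<exists>p q. pth E p \<and> pth E q \<and> distinct p \<and> distinct q \<and> p \<noteq> [] \<and> q \<noteq> [] \<and>
          set p = {x\<in>S. s x} \<and> set q = {x\<in>S. \<not> s x} \<and> U = {{last p, hd q}, {last q, hd p}}))"
proof -
  have L3: "3 \<le> length vs" and dist: "distinct vs" and pv: "pth E vs" and wr: "{last vs, hd vs} \<in> E"
    using cyc by (auto simp: is_cycle_iff)
  have ne: "vs \<noteq> []" using L3 by auto
  define c where "c = s (hd vs)"
  define W where "W = (if s (last vs) \<noteq> c then {{last vs, hd vs}} else {})"
  define U where "U = chE s vs \<union> W"
  have cc: "card (chE s vs) = ch s vs" "finite (chE s vs)" using chE_card[OF dist] by auto
  have wn: "{last vs, hd vs} \<notin> chE s vs" using wrap_notin[OF dist L3] .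
  have cardU: "card U = ch s vs + (if s (last vs) \<noteq> c then 1 else 0)"
    using cc wn by (auto simp: U_def W_def)
  have finU: "finite U" using cc by (auto simp: U_def W_def)
  have par: "ch s vs mod 2 = (if c \<noteq> s (last vs) then 1 else 0)"
    using ch_parity[OF ne, of s] by (simp add: c_def)
  have evU: "even (card U)" using cardU par by (auto simp: even_iff_mod_2_eq_zero split: if_splits; presburger)
  have UE: "U \<subseteq> E" using chE_pth[OF _ pv] wr by (auto simp: U_def W_def)
  have lastS: "last vs \<in> S" "hd vs \<in> S" using S ne by auto
  have crossU: "\<forall>e\<in>U. \<exists>a b. e = {a,b} \<and> a \<in> S \<and> b \<in> S \<and> s a \<and> \<not> s b"
  proof
    fix e assume "e \<in> U"
    then have "e \<in> chE s vs \<or> (e = {last vs, hd vs} \<and> s (last vs) \<noteq> s (hd vs))"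
      by (auto simp: U_def W_def c_def split: if_splits)
    then obtain a b where ab: "e = {a,b}" "a \<in> S" "b \<in> S" "s a \<noteq> s b"
    proof
      assume "e \<in> chE s vs"
      then obtain ys a b zs where "vs = ys @ a # b # zs" "e = {a,b}" "s a \<noteq> s b" using chE_form by metis
      then show ?thesis using that S by auto
    next
      assume "e = {last vs, hd vs} \<and> s (last vs) \<noteq> s (hd vs)"
      then show ?thesis using that lastS by blast
    qed
    show "\<exists>a b. e = {a,b} \<and> a \<in> S \<and> b \<in> S \<and> s a \<and> \<not> s b"
    proof (cases "s a")
      case True then show ?thesis using ab by blast
    next
      case False then show ?thesis using ab by (intro exI[of _ b] exI[of _ a]) (auto simp: insert_commute)
    qed
  qed
  have card1: "1 \<le> card U"
  proof (rule ccontr)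
    assume "\<not> 1 \<le> card U"
    then have "ch s vs = 0" using cardU by simp
    then have "\<forall>z\<in>set vs. s z = c" using ch0[of s vs] by (simp add: c_def)
    then show False using ex1 ex2 S by blast
  qed
  have two: "card U = 2 \<Longrightarrow> \<exists>P Q. pth E P \<and> pth E Q \<and> distinct P \<and> distinct Q \<and> P \<noteq> [] \<and> Q \<noteq> [] \<and>
          set P = {x\<in>S. s x = c} \<and> set Q = {x\<in>S. s x \<noteq> c} \<and> U = {{last P, hd Q}, {last Q, hd P}}"
  proof -
    assume c2: "card U = 2"
    show ?thesis
    proof (cases "s (last vs) \<noteq> c")
      case True
      then have "ch s vs = Suc 0" using c2 cardU by simp
      from chSuc[OF this] obtain p r where pr: "vs = p @ r" "p \<noteq> []" "r \<noteq> []" "\<forall>z\<in>set p. s z = c"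
        "s (hd r) \<noteq> c" "ch s r = 0" "chE s vs = insert {last p, hd r} (chE s r)"
        unfolding c_def by blast
      have r0: "\<forall>z\<in>set r. s z = s (hd r)" "chE s r = {}" using ch0[OF pr(6)] by auto
      have rc: "\<forall>z\<in>set r. s z \<noteq> c" using r0(1) pr(5) by metis
      have pp: "pth E p" "pth E r" using pv pr(1) by (auto simp: pth_append)
      have dd: "distinct p" "distinct r" using dist pr(1) by auto
      have sp: "set p = {x\<in>S. s x = c}" using pr(1,4) rc S by auto
      have sr: "set r = {x\<in>S. s x \<noteq> c}" using pr(1,4) rc S by auto
      have W1: "W = {{last vs, hd vs}}" using True by (simp add: W_def)
      have "chE s vs = {{last p, hd r}}" using pr(7) r0(2) by simp
      then have "U = {{last p, hd r}, {last vs, hd vs}}" using W1 unfolding U_def by (simp add: insert_commute)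
      moreover have "last vs = last r" "hd vs = hd p" using pr(1-3) by auto
      ultimately have "U = {{last p, hd r}, {last r, hd p}}" by simp
      then show ?thesis using pp dd sp sr pr(2,3) by blast
    next
      case False
      then have "ch s vs = Suc 1" using c2 cardU by simp
      from chSuc[OF this] obtain p r where pr: "vs = p @ r" "p \<noteq> []" "r \<noteq> []" "\<forall>z\<in>set p. s z = c"
        "s (hd r) \<noteq> c" "ch s r = 1" "chE s vs = insert {last p, hd r} (chE s r)"
        unfolding c_def by blast
      have r1: "ch s r = Suc 0" using pr(6) by simp
      from chSuc[OF r1] obtain q t where qt: "r = q @ t" "q \<noteq> []" "t \<noteq> []" "\<forall>z\<in>set q. s z = s (hd r)"
        "s (hd t) \<noteq> s (hd r)" "ch s t = 0" "chE s r = insert {last q, hd t} (chE s t)"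
        by blast
      have t0: "\<forall>z\<in>set t. s z = s (hd t)" "chE s t = {}" using ch0[OF qt(6)] by auto
      have e1: "s (hd t) = c" using qt(5) pr(5) by (cases "s (hd t)"; cases "s (hd r)"; cases c) auto
      have tc: "\<forall>z\<in>set t. s z = c"
      proof
        fix z assume "z \<in> set t"
        then have "s z = s (hd t)" using t0(1) by blast
        then show "s z = c" using e1 by simp
      qed
      have qc: "\<forall>z\<in>set q. s z \<noteq> c"
      proof
        fix z assume "z \<in> set q"
        then have "s z = s (hd r)" using qt(4) by blast
        then show "s z \<noteq> c" using pr(5) by simp
      qed
      have hr: "hd r = hd q" using qt(1,2) by simp
      have lv: "last vs = last t" "hd vs = hd p" using pr(1-3) qt(1,3) by auto
      have pp: "pth E p" "pth E q" "pth E t" using pv pr(1) qt(1) by (auto simp: pth_append)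
      have "pth E (t @ p)" using pp pr(2) qt(3) wr lv by (auto simp: pth_append)
      have dd: "distinct (t @ p)" "distinct q" using dist pr(1) qt(1) by auto
      have sp: "set (t @ p) = {x\<in>S. s x = c}" using pr(1,4) qt(1) tc qc S by auto
      have sr: "set q = {x\<in>S. s x \<noteq> c}" using pr(1,4) qt(1) tc qc S by auto
      have W1: "W = {}" using False by (simp add: W_def)
      have "chE s vs = {{last p, hd r}, {last q, hd t}}" using pr(7) qt(7) t0(2) by simp
      then have "U = {{last p, hd r}, {last q, hd t}}" using W1 by (simp add: U_def)
      then have "U = {{last (t @ p), hd q}, {last q, hd (t @ p)}}" using hr pr(2) qt(3) by simp
      then show ?thesis using \<open>pth E (t @ p)\<close> pp dd sp sr pr(2) qt(2) by blast
    qed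
  qed
  show ?thesis
  proof (intro exI[of _ U] conjI UE finU card1 evU crossU impI)
    assume c2: "card U = 2"
    from two[OF c2] obtain P Q where PQ: "pth E P" "pth E Q" "distinct P" "distinct Q" "P \<noteq> []" "Q \<noteq> []"
       "set P = {x\<in>S. s x = c}" "set Q = {x\<in>S. s x \<noteq> c}" "U = {{last P, hd Q}, {last Q, hd P}}" by blast
    show "\<exists>p q. pth E p \<and> pth E q \<and> distinct p \<and> distinct q \<and> p \<noteq> [] \<and> q \<noteq> [] \<and>
          set p = {x\<in>S. s x} \<and> set q = {x\<in>S. \<not> s x} \<and> U = {{last p, hd q}, {last q, hd p}}"
    proof (cases c)
      case True
      then show ?thesis using PQ by (intro exI[of _ P] exI[of _ Q]) auto
    next
      case False
      then show ?thesis using PQ by (intro exI[of _ Q] exI[of _ P]) (auto simp: insert_commute)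
    qed
  qed
qed



lemma simple_edge: "simple_graph V E \<Longrightarrow> {a,b} \<in> E \<Longrightarrow> a \<in> V \<and> b \<in> V \<and> a \<noteq> b"
  unfolding simple_graph_def by (metis doubleton_eq_iff)

lemma simple_finE: "simple_graph V E \<Longrightarrow> finite E"
proof -
  assume s: "simple_graph V E"
  have "E \<subseteq> Pow V"
  proof
    fix e assume "e \<in> E"
    then obtain u v where "e = {u,v}" "u \<in> V" "v \<in> V" using s unfolding simple_graph_def by blast
    then show "e \<in> Pow V" by auto
  qed
  moreover have "finite V" using s unfolding simple_graph_def by (simp only: conj_assoc)
  ultimately show "finite E" using finite_subset finite_Pow_iff by blast
qed

lemma reach_refl: "u \<in> V \<Longrightarrow> reachable V E' u u" by (simp add: reachable_def)

lemma reach_sym: assumes "reachable V E' u v" shows "reachable V E' v u"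
proof -
  let ?R = "{(x, y). x \<in> V \<and> y \<in> V \<and> {x, y} \<in> E'}"
  have "sym ?R" by (auto simp: sym_def insert_commute)
  then have "sym (?R\<^sup>*)" by (rule sym_rtrancl)
  then show ?thesis using assms unfolding reachable_def by (meson symD)
qed

lemma reach_trans: "reachable V E' u v \<Longrightarrow> reachable V E' v x \<Longrightarrow> reachable V E' u x"
  unfolding reachable_def by (meson rtrancl_trans)

lemma reach_step: "reachable V E' u a \<Longrightarrow> {a,b} \<in> E' \<Longrightarrow> b \<in> V \<Longrightarrow> reachable V E' u b"
  unfolding reachable_def by (auto intro: rtrancl_into_rtrancl)

lemma comp_cases: "K \<in> components V E' \<Longrightarrow> \<exists>u\<in>V. K = {v. reachable V E' u v}"
  by (auto simp: components_def)

lemma comp_mem: "u \<in> V \<Longrightarrow> {v. reachable V E' u v} \<in> components V E'"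
  by (auto simp: components_def)

lemma comp_sub: "K \<in> components V E' \<Longrightarrow> K \<subseteq> V"
  by (auto simp: components_def reachable_def)

lemma comp_ne: "K \<in> components V E' \<Longrightarrow> K \<noteq> {}"
  by (auto simp: components_def intro: reach_refl)

lemma comp_closed: assumes "K \<in> components V E'" "a \<in> K" "{a,b} \<in> E'" "b \<in> V" shows "b \<in> K"
proof -
  obtain u where u: "K = {v. reachable V E' u v}" using comp_cases[OF assms(1)] by blast
  then have "reachable V E' u a" using assms(2) by simp
  then have "reachable V E' u b" using reach_step assms(3,4) by metis
  then show ?thesis using u by simp
qed

lemma comp_disj: assumes "K \<in> components V E'" "K' \<in> components V E'" "x \<in> K" "x \<in> K'" shows "K = K'"
proof -
  obtain u where u: "K = {v. reachable V E' u v}" using comp_cases[OF assms(1)] by blast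
  obtain u' where u': "K' = {v. reachable V E' u' v}" using comp_cases[OF assms(2)] by blast
  have "reachable V E' u x" "reachable V E' u' x" using assms u u' by auto
  then have "reachable V E' u u'" "reachable V E' u' u" by (meson reach_sym reach_trans)+
  then have "\<forall>v. reachable V E' u v \<longleftrightarrow> reachable V E' u' v" by (meson reach_trans)
  then show ?thesis using u u' by simp
qed

definition cross :: "'a set \<Rightarrow> 'a set set \<Rightarrow> 'a set \<Rightarrow> 'a set set" where
  "cross V E A = {e\<in>E. \<exists>a b. e = {a,b} \<and> a \<in> A \<and> b \<in> V - A}"

lemma comp_cross: assumes "simple_graph V E" "K \<in> components V (E - F)"
  shows "cross V E K \<subseteq> F"
proof
  fix e assume "e \<in> cross V E K"
  then obtain a b where e: "e \<in> E" "e = {a,b}" "a \<in> K" "b \<in> V - K" by (auto simp: cross_def)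
  show "e \<in> F"
  proof (rule ccontr)
    assume "e \<notin> F"
    then have "{a,b} \<in> E - F" using e by simp
    then have "b \<in> K" using comp_closed[OF assms(2) e(3)] e(4) by blast
    then show False using e by simp
  qed
qed

lemma join_cycle:
  assumes "pth E p" "pth E q" "distinct p" "distinct q" "set p \<inter> set q = {}" "p \<noteq> []" "q \<noteq> []"
    "3 \<le> length p + length q" "{last p, hd q} \<in> E" "{last q, hd p} \<in> E"
  shows "is_cycle E (p @ q)"
proof -
  have "distinct (p @ q)" using assms(3-5) by simp
  moreover have "pth E (p @ q)" using assms(1,2,9) by (simp add: pth_append)
  moreover have "{last (p @ q), hd (p @ q)} \<in> E" using assms(6,7,10) by simp
  moreover have "3 \<le> length (p @ q)" using assms(8) by simp
  ultimately show ?thesis unfolding is_cycle_iff by blast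
qed

lemma hd_last_ne: assumes d: "distinct xs" and l: "2 \<le> length xs" shows "hd xs \<noteq> last xs"
proof (cases xs)
  case Nil then show ?thesis using l by simp
next
  case (Cons x ys)
  then have "ys \<noteq> []" using Cons l by auto
  then have "last xs \<in> set ys" using Cons by simp
  then show ?thesis using d Cons by auto
qed



lemma cyc_nbrs: assumes "is_cycle E vs" "u \<in> set vs" shows "\<exists>a b. a \<noteq> b \<and> {u,a} \<in> E \<and> {u,b} \<in> E"
proof -
  define n where "n = length vs"
  have A: "\<forall>i<n. {vs!i, vs!((i+1) mod n)} \<in> E" and n3: "3 \<le> n" and d: "distinct vs"
    using assms(1) unfolding is_cycle_def n_def by auto
  obtain i where i: "i < n" "vs!i = u" using assms(2) unfolding n_def by (metis in_set_conv_nth)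
  show ?thesis
  proof (cases "i = 0")
    case True
    have e1: "{vs!0, vs!1} \<in> E" using A n3 by (metis One_nat_def Suc_1 add_0 less_le_trans mod_less numeral_3_eq_3 one_less_numeral_iff semiring_norm(77) zero_less_numeral)
    have nn: "n - 1 + 1 = n" using n3 by simp
    have e2: "{vs!(n-1), vs!0} \<in> E" using A[rule_format, of "n-1"] n3 nn by simp
    have ne: "vs!1 \<noteq> vs!(n-1)" using n3 d by (simp add: nth_eq_iff_index_eq n_def)
    show ?thesis using e1 e2 ne True i by (intro exI[of _ "vs!1"] exI[of _ "vs!(n-1)"]) (auto simp: insert_commute)
  next
    case False
    define j where "j = (i+1) mod n"
    have jn: "j < n" using n3 unfolding j_def by simp
    have e1: "{vs!i, vs!j} \<in> E" using A i unfolding j_def by blast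
    have ii: "(i - 1 + 1) mod n = i" using False i by simp
    have e2: "{vs!(i-1), vs!i} \<in> E" using A[rule_format, of "i-1"] i ii by simp
    have jne: "j \<noteq> i - 1"
    proof (cases "Suc i < n")
      case True then show ?thesis unfolding j_def by simp
    next
      case F2: False
      then have "Suc i = n" using i by simp
      then have "j = 0" unfolding j_def by simp
      moreover have "i - 1 \<noteq> 0" using \<open>Suc i = n\<close> n3 by simp
      ultimately show ?thesis by simp
    qed
    have ne: "vs!j \<noteq> vs!(i-1)" using jn i jne d by (simp add: nth_eq_iff_index_eq n_def)
    show ?thesis using e1 e2 ne i by (intro exI[of _ "vs!j"] exI[of _ "vs!(i-1)"]) (auto simp: insert_commute)
  qed
qed

lemma ham_del: assumes "almost_hypohamiltonian V E w" "v \<in> V" "v \<noteq> w"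
  shows "\<exists>vs. is_cycle (del_vertex_E E v) vs \<and> set vs = V - {v}"
  using assms unfolding almost_hypohamiltonian_def hamiltonian_def del_vertex_V_def by blast

lemma card4: assumes ah: "almost_hypohamiltonian V E w" and v: "v \<in> V" "v \<noteq> w"
  shows "4 \<le> card V"
proof -
  obtain vs where vs: "is_cycle (del_vertex_E E v) vs" "set vs = V - {v}" using ham_del[OF ah v] by blast
  have fin: "finite V" using ah unfolding almost_hypohamiltonian_def simple_graph_def by blast
  have "card (V - {v}) = length vs" using vs distinct_card unfolding is_cycle_def by metis
  moreover have "3 \<le> length vs" using vs(1) unfolding is_cycle_def by blast
  moreover have "card (V - {v}) = card V - 1" using fin v by simp
  ultimately show ?thesis by linarith
qed

lemma nbr_del: assumes ah: "almost_hypohamiltonian V E w" and x: "x \<in> V" "x \<noteq> w" and u: "u \<in> V" "u \<noteq> x"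
  shows "\<exists>a b. a \<noteq> b \<and> {u,a} \<in> E \<and> {u,b} \<in> E \<and> a \<noteq> x \<and> b \<noteq> x"
proof -
  obtain vs where vs: "is_cycle (del_vertex_E E x) vs" "set vs = V - {x}" using ham_del[OF ah x] by blast
  have "u \<in> set vs" using vs u by simp
  from cyc_nbrs[OF vs(1) this] obtain a b where ab: "a \<noteq> b" "{u,a} \<in> del_vertex_E E x" "{u,b} \<in> del_vertex_E E x"
    by blast
  then show ?thesis unfolding del_vertex_E_def by blast
qed

lemma degree3: assumes ah: "almost_hypohamiltonian V E w" and v0: "v0 \<in> V" "v0 \<noteq> w" and u: "u \<in> V"
  shows "3 \<le> card {e\<in>E. u \<in> e}"
proof -
  have sg: "simple_graph V E" using ah unfolding almost_hypohamiltonian_def by blast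
  have fin: "finite V" using sg unfolding simple_graph_def by blast
  have c4: "4 \<le> card V" using card4[OF ah v0] .
  have "\<not> V \<subseteq> {u, w}"
  proof
    assume "V \<subseteq> {u,w}"
    then have "card V \<le> card {u,w}" by (simp add: card_mono)
    also have "\<dots> \<le> 2" by (simp add: card_insert_le_m1)
    finally show False using c4 by simp
  qed
  then obtain x where x: "x \<in> V" "x \<noteq> u" "x \<noteq> w" by blast
  obtain a b where ab: "a \<noteq> b" "{u,a} \<in> E" "{u,b} \<in> E" using nbr_del[OF ah x(1,3) u] x(2) by metis
  obtain a' where a': "{u,a'} \<in> E" "a' \<noteq> w" using ab by metis
  have a'V: "a' \<in> V" "a' \<noteq> u" using simple_edge[OF sg a'(1)] by auto
  obtain c d where cd: "c \<noteq> d" "{u,c} \<in> E" "{u,d} \<in> E" "c \<noteq> a'" "d \<noteq> a'"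
    using nbr_del[OF ah a'V(1) a'(2) u] a'V(2) by metis
  have cu: "c \<noteq> u" "d \<noteq> u" using simple_edge[OF sg cd(2)] simple_edge[OF sg cd(3)] by auto
  have sub: "{{u,a'},{u,c},{u,d}} \<subseteq> {e\<in>E. u \<in> e}" using a'(1) cd(2,3) by auto
  have finE: "finite {e\<in>E. u \<in> e}" using simple_finE[OF sg] by simp
  have d1: "{u,a'} \<noteq> {u,c}" using a'V(2) cu cd(4) by (auto simp: doubleton_eq_iff)
  have d2: "{u,a'} \<noteq> {u,d}" using a'V(2) cu cd(5) by (auto simp: doubleton_eq_iff)
  have d3: "{u,c} \<noteq> {u,d}" using cu cd(1) by (auto simp: doubleton_eq_iff)
  have "card {{u,a'},{u,c},{u,d}} = 3" using d1 d2 d3 by simp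
  then show ?thesis using card_mono[OF finE sub] by simp
qed



lemma key_cycle:
  assumes ah: "almost_hypohamiltonian V E w" and AB: "A \<inter> B = {}" "A \<union> B = V"
    and v: "v \<in> V" "v \<noteq> w" and nA: "A - {v} \<noteq> {}" and nB: "B - {v} \<noteq> {}"
    and X: "X = {e\<in>E. \<exists>a b. e = {a,b} \<and> a \<in> A \<and> b \<in> B}" and cX: "card X \<le> 3"
  shows "\<exists>U. U \<subseteq> X \<and> (\<forall>e\<in>U. v \<notin> e) \<and> card U = 2 \<and> finite U \<and>
     (\<exists>p q. pth E p \<and> pth E q \<and> distinct p \<and> distinct q \<and> p \<noteq> [] \<and> q \<noteq> [] \<and>
        set p = A - {v} \<and> set q = B - {v} \<and> U = {{last p, hd q}, {last q, hd p}})"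
proof -
  have sg: "simple_graph V E" using ah unfolding almost_hypohamiltonian_def by blast
  have finX: "finite X" using simple_finE[OF sg] X by simp
  obtain vs where vs: "is_cycle (del_vertex_E E v) vs" "set vs = V - {v}" using ham_del[OF ah v] by blast
  have ex1: "\<exists>x\<in>V - {v}. x \<in> A" using nA AB by blast
  have ex2: "\<exists>x\<in>V - {v}. x \<notin> A" using nB AB by blast
  from cycle_cross[OF vs(1) vs(2) ex1 ex2] obtain U where HU:
    "U \<subseteq> del_vertex_E E v \<and> finite U \<and> 1 \<le> card U \<and> even (card U) \<and>
    (\<forall>e\<in>U. \<exists>a b. e = {a,b} \<and> a \<in> V - {v} \<and> b \<in> V - {v} \<and> a \<in> A \<and> b \<notin> A) \<and>
    (card U = 2 \<longrightarrow> (\<exists>p q. pth (del_vertex_E E v) p \<and> pth (del_vertex_E E v) q \<and> distinct p \<and> distinct q \<and> p \<noteq> [] \<and> q \<noteq> [] \<and>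
          set p = {x\<in>V - {v}. x \<in> A} \<and> set q = {x\<in>V - {v}. x \<notin> A} \<and> U = {{last p, hd q}, {last q, hd p}}))"
    by (rule exE)
  note U1 = conjunct1[OF HU] and H2 = conjunct2[OF HU]
  note U2 = conjunct1[OF H2] and H3 = conjunct2[OF H2]
  note U3 = conjunct1[OF H3] and H4 = conjunct2[OF H3]
  note U4 = conjunct1[OF H4] and H5 = conjunct2[OF H4]
  note U5 = conjunct1[OF H5] and U6 = conjunct2[OF H5]
  note U = U1 U2 U3 U4 U5 U6
  have UX: "U \<subseteq> X"
  proof
    fix e assume e: "e \<in> U"
    then have eE: "e \<in> E" using U(1) unfolding del_vertex_E_def by blast
    have "\<exists>a b. e = {a,b} \<and> a \<in> V - {v} \<and> b \<in> V - {v} \<and> a \<in> A \<and> b \<notin> A" using U(5) e by (rule bspec)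
    then show "e \<in> X"
    proof (elim exE conjE)
      fix a b assume h: "e = {a,b}" "a \<in> V - {v}" "b \<in> V - {v}" "a \<in> A" "b \<notin> A"
      have "b \<in> A \<union> B" using AB(2) h(3) by simp
      then have "b \<in> B" using h(5) by simp
      then have "e \<in> E \<and> (\<exists>a b. e = {a,b} \<and> a \<in> A \<and> b \<in> B)" using eE h(1,4)
        by (intro conjI exI[of _ a] exI[of _ b]) simp_all
      then show "e \<in> X" using X by simp
    qed
  qed
  have Uv: "\<forall>e\<in>U. v \<notin> e" using U(1) unfolding del_vertex_E_def by blast
  have "card U \<le> 3" using card_mono[OF finX UX] cX by simp
  then have c2: "card U = 2" using U(3,4) by presburger
  then obtain p q where pq: "pth (del_vertex_E E v) p" "pth (del_vertex_E E v) q" "distinct p" "distinct q" "p \<noteq> []" "q \<noteq> []"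
          "set p = {x\<in>V - {v}. x \<in> A}" "set q = {x\<in>V - {v}. x \<notin> A}" "U = {{last p, hd q}, {last q, hd p}}"
    using U(6) by blast
  have sub: "del_vertex_E E v \<subseteq> E" unfolding del_vertex_E_def by blast
  have "pth E p" "pth E q" using pth_mono[OF pq(1) sub] pth_mono[OF pq(2) sub] by auto
  moreover have "set p = A - {v}" using pq(7) AB by blast
  moreover have "set q = B - {v}" using pq(8) AB by blast
  ultimately show ?thesis using UX Uv c2 U(2) pq(3-6,9)
    apply -
    apply (rule exI[of _ U])
    apply (intro conjI)
    apply assumption+
    apply (rule exI[of _ p])
    apply (rule exI[of _ q])
    apply (intro conjI)
    apply assumption+
    done
qed

lemma two_elems: assumes "2 \<le> card A" shows "\<exists>y\<in>A. y \<noteq> w"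
proof (rule ccontr)
  assume "\<not> (\<exists>y\<in>A. y \<noteq> w)"
  then have "A \<subseteq> {w}" by blast
  then have "card A \<le> card {w}" by (intro card_mono) simp_all
  then have "card A \<le> 1" by simp
  then show False using assms by simp
qed



lemma key_obt:
  assumes ah: "almost_hypohamiltonian V E w" and AB: "A \<inter> B = {}" "A \<union> B = V"
    and v: "v \<in> V" "v \<noteq> w" and nA: "A - {v} \<noteq> {}" and nB: "B - {v} \<noteq> {}"
    and X: "X = {e\<in>E. \<exists>a b. e = {a,b} \<and> a \<in> A \<and> b \<in> B}" and cX: "card X \<le> 3"
  obtains U p q where "U \<subseteq> X" "\<forall>e\<in>U. v \<notin> e" "card U = 2" "finite U"
     "pth E p" "pth E q" "distinct p" "distinct q" "p \<noteq> []" "q \<noteq> []"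
     "set p = A - {v}" "set q = B - {v}" "U = {{last p, hd q}, {last q, hd p}}"
proof -
  have "\<exists>U. U \<subseteq> X \<and> (\<forall>e\<in>U. v \<notin> e) \<and> card U = 2 \<and> finite U \<and>
     (\<exists>p q. pth E p \<and> pth E q \<and> distinct p \<and> distinct q \<and> p \<noteq> [] \<and> q \<noteq> [] \<and>
        set p = A - {v} \<and> set q = B - {v} \<and> U = {{last p, hd q}, {last q, hd p}})"
    by (rule key_cycle[OF ah AB v nA nB X cX])
  then show thesis by (elim exE conjE) (rule that)
qed

lemma match2: "{a,b} = {c,d} \<Longrightarrow> a \<in> A \<Longrightarrow> c \<in> A \<Longrightarrow> b \<notin> A \<Longrightarrow> d \<notin> A \<Longrightarrow> a = c \<and> b = d"
  by (auto simp: doubleton_eq_iff)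



lemma MLp:
  assumes ah: "almost_hypohamiltonian V E w" and AB: "A \<inter> B = {}" "A \<union> B = V" and wB: "w \<notin> B"
    and cA: "2 \<le> card A" and cB: "2 \<le> card B"
    and X: "X = {e\<in>E. \<exists>a b. e = {a,b} \<and> a \<in> A \<and> b \<in> B}" and cX: "card X \<le> 3"
  shows False
proof -
  have sg: "simple_graph V E" using ah unfolding almost_hypohamiltonian_def by blast
  have nham: "\<not> hamiltonian V E" using ah unfolding almost_hypohamiltonian_def by blast
  have finE: "finite E" using simple_finE[OF sg] .
  have XE: "X \<subseteq> E" using X by blast
  have finX: "finite X" using finite_subset[OF XE finE] .
  have Bne: "B \<noteq> {}" using cB by (cases "B = {}") simp_all
  have Ane: "A \<noteq> {}" using cA by (cases "A = {}") simp_all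
  obtain y where y: "y \<in> A" "y \<noteq> w" using two_elems[OF cA] by blast
  have yV: "y \<in> V" using y AB by blast
  have yB: "y \<notin> B" using y AB by blast
  have nAy: "A - {y} \<noteq> {}" using two_elems[OF cA, of y] by blast
  have nBy: "B - {y} \<noteq> {}" using Bne yB by simp
  obtain Uy py qy where Y: "Uy \<subseteq> X" "\<forall>e\<in>Uy. y \<notin> e" "card Uy = 2" "finite Uy"
     "pth E py" "pth E qy" "distinct py" "distinct qy" "py \<noteq> []" "qy \<noteq> []"
     "set py = A - {y}" "set qy = B - {y}" "Uy = {{last py, hd qy}, {last qy, hd py}}"
    by (rule key_obt[OF ah AB yV y(2) nAy nBy X cX])
  have sqy: "set qy = B" using Y(12) yB by simp
  have cXU: "card (X - Uy) \<le> 1" using card_Diff_subset[OF Y(4) Y(1)] cX Y(3) by simp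
  obtain x where x: "x \<in> B" "\<forall>e\<in>X - Uy. x \<in> e"
  proof (cases "X - Uy = {}")
    case True
    obtain b where "b \<in> B" using Bne by blast
    then show thesis using True by (intro that) auto
  next
    case False
    have "finite (X - Uy)" using finX by simp
    then have "card (X - Uy) \<noteq> 0" using False by simp
    then have "card (X - Uy) = 1" using cXU by linarith
    then obtain e where e: "X - Uy = {e}" by (rule card_1_singletonE)
    then have "e \<in> X" by auto
    then have "\<exists>a b. e = {a,b} \<and> a \<in> A \<and> b \<in> B" using X by simp
    then obtain a b where ab: "e = {a,b}" "a \<in> A" "b \<in> B" by (elim exE conjE)
    show thesis
    proof (rule that[of b])
      show "b \<in> B" by (rule ab(3))
      show "\<forall>e\<in>X - Uy. b \<in> e" using e ab(1) by simp
    qed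
  qed
  have xV: "x \<in> V" using x AB by blast
  have xw: "x \<noteq> w" using x wB by blast
  have xA: "x \<notin> A" using x AB by blast
  have nAx: "A - {x} \<noteq> {}" using Ane xA by simp
  have nBx: "B - {x} \<noteq> {}" using two_elems[OF cB, of x] by blast
  obtain Ux px qx where XX: "Ux \<subseteq> X" "\<forall>e\<in>Ux. x \<notin> e" "card Ux = 2" "finite Ux"
     "pth E px" "pth E qx" "distinct px" "distinct qx" "px \<noteq> []" "qx \<noteq> []"
     "set px = A - {x}" "set qx = B - {x}" "Ux = {{last px, hd qx}, {last qx, hd px}}"
    by (rule key_obt[OF ah AB xV xw nAx nBx X cX])
  have spx: "set px = A" using XX(11) xA by simp
  have sub: "Ux \<subseteq> Uy"
  proof
    fix e assume e: "e \<in> Ux"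
    show "e \<in> Uy"
    proof (rule ccontr)
      assume "e \<notin> Uy"
      then have "e \<in> X - Uy" using e XX(1) by blast
      then have "x \<in> e" using x(2) by blast
      then show False using XX(2) e by blast
    qed
  qed
  have UU: "Ux = Uy" using card_subset_eq[OF Y(4) sub] XX(3) Y(3) by simp
  define a1 where "a1 = last px"
  define a2 where "a2 = hd px"
  define b1 where "b1 = hd qy"
  define b2 where "b2 = last qy"
  define al1 where "al1 = last py"
  define al2 where "al2 = hd py"
  have a1A: "a1 \<in> A" using XX(9) spx unfolding a1_def using last_in_set by blast
  have a2A: "a2 \<in> A" using XX(9) spx unfolding a2_def using hd_in_set by blast
  have b1B: "b1 \<notin> A" using Y(10) sqy AB unfolding b1_def using hd_in_set by blast
  have b2B: "b2 \<notin> A" using Y(10) sqy AB unfolding b2_def using last_in_set by blast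
  have al1A: "al1 \<in> A" using Y(9) Y(11) unfolding al1_def using last_in_set by blast
  have al2A: "al2 \<in> A" using Y(9) Y(11) unfolding al2_def using hd_in_set by blast
  have hqxB: "hd qx \<notin> A" "last qx \<notin> A" using XX(10) XX(12) AB hd_in_set last_in_set by blast+
  have lpx: "length px = card A" using distinct_card[OF XX(7)] spx by simp
  have a12: "a1 \<noteq> a2" using hd_last_ne[OF XX(7)] lpx cA unfolding a1_def a2_def by simp
  have UyE: "Uy \<subseteq> E" using Y(1) XE by blast
  have Uy': "Uy = {{al1, b1}, {b2, al2}}" using Y(13) unfolding al1_def al2_def b1_def b2_def .
  have hx1: "{a1, hd qx} \<in> Uy" using XX(13) UU unfolding a1_def by blast
  have hx2: "{a2, last qx} \<in> Uy" using XX(13) UU unfolding a2_def by (simp add: insert_commute)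
  have c1: "a1 = al1 \<or> a1 = al2"
  proof -
    have "{a1, hd qx} = {al1, b1} \<or> {a1, hd qx} = {al2, b2}" using hx1 Uy' by (simp add: insert_commute)
    then show ?thesis using match2[OF _ a1A al1A hqxB(1) b1B] match2[OF _ a1A al2A hqxB(1) b2B] by blast
  qed
  have c2: "a2 = al1 \<or> a2 = al2"
  proof -
    have "{a2, last qx} = {al1, b1} \<or> {a2, last qx} = {al2, b2}" using hx2 Uy' by (simp add: insert_commute)
    then show ?thesis using match2[OF _ a2A al1A hqxB(2) b1B] match2[OF _ a2A al2A hqxB(2) b2B] by blast
  qed
  have e1: "{al1, b1} \<in> E" "{b2, al2} \<in> E" using Uy' UyE by auto
  obtain q' where q': "pth E q'" "distinct q'" "q' \<noteq> []" "set q' = B" "length q' = length qy"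
      "{last px, hd q'} \<in> E" "{last q', hd px} \<in> E"
  proof (cases "a1 = al1")
    case True
    then have "a2 = al2" using c2 a12 by blast
    then show thesis using True e1 Y(6,8,10) sqy unfolding a1_def a2_def b1_def b2_def
      by (intro that[of qy]) simp_all
  next
    case False
    then have "a1 = al2" "a2 = al1" using c1 c2 a12 by blast+
    moreover have "{b2, al2} = {al2, b2}" "{al1, b1} = {b1, al1}" by (simp_all add: insert_commute)
    ultimately have "{a1, b2} \<in> E" "{b1, a2} \<in> E" using e1 by simp_all
    then show thesis using Y(6,8,10) sqy unfolding a1_def a2_def b1_def b2_def
      by (intro that[of "rev qy"]) (simp_all add: pth_rev last_rev hd_rev)
  qed
  have "is_cycle E (px @ q')"
  proof (rule join_cycle[OF XX(5) q'(1) XX(7) q'(2) _ XX(9) q'(3) _ q'(6) q'(7)])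
    show "set px \<inter> set q' = {}" using spx q'(4) AB by simp
    have "length q' = card B" using distinct_card[OF q'(2)] q'(4) by simp
    then show "3 \<le> length px + length q'" using lpx cA cB by simp
  qed
  moreover have "set (px @ q') = V" using spx q'(4) AB by simp
  ultimately have "hamiltonian V E" unfolding hamiltonian_def by blast
  then show False using nham by blast
qed



lemma cross_sym: assumes "A \<subseteq> V"
  shows "cross V E A = {e\<in>E. \<exists>a b. e = {a,b} \<and> a \<in> V - A \<and> b \<in> A}"
proof (rule set_eqI)
  fix e
  have "(\<exists>a b. e = {a,b} \<and> a \<in> A \<and> b \<in> V - A) \<longleftrightarrow> (\<exists>a b. e = {a,b} \<and> a \<in> V - A \<and> b \<in> A)"
    by (metis insert_commute)
  then show "e \<in> cross V E A \<longleftrightarrow> e \<in> {e\<in>E. \<exists>a b. e = {a,b} \<and> a \<in> V - A \<and> b \<in> A}"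
    unfolding cross_def by simp
qed

lemma MLc: assumes ah: "almost_hypohamiltonian V E w" and AV: "A \<subseteq> V" and cA: "2 \<le> card A"
  and cB: "2 \<le> card (V - A)" and cX: "card (cross V E A) \<le> 3" shows False
proof (cases "w \<in> A")
  case True
  show False
  proof (rule MLp[OF ah _ _ _ cA cB _ cX])
    show "A \<inter> (V - A) = {}" by blast
    show "A \<union> (V - A) = V" using AV by blast
    show "w \<notin> V - A" using True by blast
    show "cross V E A = {e\<in>E. \<exists>a b. e = {a,b} \<and> a \<in> A \<and> b \<in> V - A}" unfolding cross_def ..
  qed
next
  case False
  show False
  proof (rule MLp[OF ah _ _ _ cB cA _ cX])
    show "(V - A) \<inter> A = {}" by blast
    show "(V - A) \<union> A = V" using AV by blast
    show "w \<notin> A" using False by blast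
    show "cross V E A = {e\<in>E. \<exists>a b. e = {a,b} \<and> a \<in> V - A \<and> b \<in> A}" by (rule cross_sym[OF AV])
  qed
qed

lemma cyc_card: assumes "contains_cycle C E'" "finite C" shows "3 \<le> card C"
proof -
  obtain vs where vs: "is_cycle E' vs" "set vs \<subseteq> C" using assms(1) unfolding contains_cycle_def by blast
  have "card (set vs) = length vs" using vs(1) distinct_card unfolding is_cycle_def by blast
  moreover have "3 \<le> length vs" using vs(1) unfolding is_cycle_def by blast
  moreover have "card (set vs) \<le> card C" using card_mono[OF assms(2) vs(2)] .
  ultimately show ?thesis by linarith
qed

lemma part2: assumes ah: "almost_hypohamiltonian V E w" shows "cyclically_4_edge_connected V E"
  unfolding cyclically_4_edge_connected_def
proof (intro allI impI notI)
  fix F assume F: "F \<subseteq> E" "card F < 4"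
  assume "\<exists>C1 C2. components V (E - F) = {C1, C2} \<and> C1 \<noteq> C2 \<and> contains_cycle C1 (E - F) \<and> contains_cycle C2 (E - F)"
  then obtain C1 C2 where C: "components V (E - F) = {C1, C2}" "C1 \<noteq> C2" "contains_cycle C1 (E - F)" "contains_cycle C2 (E - F)"
    by (elim exE conjE)
  have sg: "simple_graph V E" using ah unfolding almost_hypohamiltonian_def by blast
  have finV: "finite V" using sg unfolding simple_graph_def by blast
  have finE: "finite E" using simple_finE[OF sg] .
  have K1: "C1 \<in> components V (E - F)" and K2: "C2 \<in> components V (E - F)" using C(1) by auto
  have s1: "C1 \<subseteq> V" using comp_sub[OF K1] .
  have s2: "C2 \<subseteq> V" using comp_sub[OF K2] .
  have c1: "3 \<le> card C1" using cyc_card[OF C(3) finite_subset[OF s1 finV]] .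
  have c2: "3 \<le> card C2" using cyc_card[OF C(4) finite_subset[OF s2 finV]] .
  have disj: "C1 \<inter> C2 = {}" using comp_disj[OF K1 K2] C(2) by blast
  have "C2 \<subseteq> V - C1" using s2 disj by blast
  then have "card C2 \<le> card (V - C1)" using finV by (simp add: card_mono)
  then have cB: "2 \<le> card (V - C1)" using c2 by linarith
  have "cross V E C1 \<subseteq> F" using comp_cross[OF sg K1] .
  moreover have "finite F" using finite_subset[OF F(1) finE] .
  ultimately have "card (cross V E C1) \<le> card F" by (simp add: card_mono)
  then have cX: "card (cross V E C1) \<le> 3" using F(2) by linarith
  show False using MLc[OF ah s1 _ cB cX] c1 by linarith
qed



lemma part1:
  assumes ah: "almost_hypohamiltonian V E w" and M: "M \<subseteq> E" "card M = 3" "\<not> connected_graph V (E - M)"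
  shows "\<exists>A1 A2. components V (E - M) = {A1, A2} \<and> A1 \<noteq> A2 \<and> card A1 = 1 \<and> card A2 \<noteq> 1"
proof -
  have sg: "simple_graph V E" using ah unfolding almost_hypohamiltonian_def by blast
  have finV: "finite V" using sg unfolding simple_graph_def by blast
  have finE: "finite E" using simple_finE[OF sg] .
  have Vne: "V \<noteq> {}" using ah unfolding almost_hypohamiltonian_def connected_graph_def by blast
  have finM: "finite M" using M(2) by (cases "finite M") simp_all
  have Mne: "M \<noteq> {}" using M(2) by (cases "M = {}") simp_all
  then obtain e0 where e0: "e0 \<in> M" by blast
  then have "e0 \<in> E" using M(1) by blast
  then obtain p0 q0 where pq0: "e0 = {p0, q0}" "p0 \<noteq> q0" "p0 \<in> V" "q0 \<in> V" using sg unfolding simple_graph_def by blast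
  obtain v0 where v0: "v0 \<in> V" "v0 \<noteq> w" using pq0 by metis
  have c4: "4 \<le> card V" using card4[OF ah v0] .
  obtain u v where uv: "u \<in> V" "v \<in> V" "\<not> reachable V (E - M) u v"
    using M(3) Vne unfolding connected_graph_def by blast
  define K1 where "K1 = {x. reachable V (E - M) u x}"
  define K2 where "K2 = {x. reachable V (E - M) v x}"
  have K1c: "K1 \<in> components V (E - M)" unfolding K1_def using comp_mem[OF uv(1)] .
  have K2c: "K2 \<in> components V (E - M)" unfolding K2_def using comp_mem[OF uv(2)] .
  have uK1: "u \<in> K1" unfolding K1_def using reach_refl[OF uv(1)] by simp
  have vK2: "v \<in> K2" unfolding K2_def using reach_refl[OF uv(2)] by simp
  have vK1: "v \<notin> K1" unfolding K1_def using uv(3) by simp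
  have K12: "K1 \<noteq> K2" using vK1 vK2 by blast
  have disj12: "K1 \<inter> K2 = {}" using comp_disj[OF K1c K2c] K12 by blast
  have uK2: "u \<notin> K2" using disj12 uK1 by blast
  have crossM: "card (cross V E K) \<le> 3" if "K \<in> components V (E - M)" for K
  proof -
    have "cross V E K \<subseteq> M" using comp_cross[OF sg that] .
    then show ?thesis using card_mono[OF finM] M(2) by metis
  qed
  have single: "card K = 1" if K: "K \<in> components V (E - M)" and ab: "a \<in> V - K" "b \<in> V - K" "a \<noteq> b" for K a b
  proof -
    have KV: "K \<subseteq> V" using comp_sub[OF K] .
    have "{a,b} \<subseteq> V - K" using ab by blast
    moreover have "card {a,b} = 2" using ab(3) by simp
    ultimately have cB: "2 \<le> card (V - K)" using card_mono[of "V - K" "{a,b}"] finV by simp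
    have "\<not> 2 \<le> card K" using MLc[OF ah KV _ cB crossM[OF K]] by blast
    moreover have "K \<noteq> {}" using comp_ne[OF K] .
    moreover have "finite K" using finite_subset[OF KV finV] .
    ultimately show ?thesis by (simp add: card_gt_0_iff[symmetric]) (metis One_nat_def Suc_1 card_gt_0_iff less_Suc_eq_le not_less order_antisym_conv)
  qed
  have edges_at: "M = {e\<in>E. z \<in> e}" if z: "{z} \<in> components V (E - M)" for z
  proof -
    have zV: "z \<in> V" using comp_sub[OF z] by blast
    have sub: "{e\<in>E. z \<in> e} \<subseteq> M"
    proof
      fix e assume e: "e \<in> {e\<in>E. z \<in> e}"
      then obtain p q where pq: "e = {p,q}" "p \<noteq> q" "p \<in> V" "q \<in> V" using sg unfolding simple_graph_def by blast
      obtain b where b: "e = {z, b}" "b \<noteq> z" "b \<in> V" using pq e by auto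
      show "e \<in> M"
      proof (rule ccontr)
        assume "e \<notin> M"
        then have "{z,b} \<in> E - M" using e b(1) by simp
        then have "b \<in> {z}" using comp_closed[OF z _ _ b(3)] by simp
        then show False using b(2) by simp
      qed
    qed
    have "3 \<le> card {e\<in>E. z \<in> e}" using degree3[OF ah v0 zV] .
    then show ?thesis using card_subset_eq[OF finM sub] M(2) card_mono[OF finM sub] by simp
  qed
  have toS: "K = {t}" if "K \<in> components V (E - M)" "card K = 1" "t \<in> K" for K t
    using that by (metis card_1_singletonE singletonD)
  have comps: "components V (E - M) = {K1, K2}"
  proof
    show "{K1, K2} \<subseteq> components V (E - M)" using K1c K2c by blast
    show "components V (E - M) \<subseteq> {K1, K2}"
    proof
      fix K assume K: "K \<in> components V (E - M)"
      show "K \<in> {K1, K2}"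
      proof (rule ccontr)
        assume nK: "K \<notin> {K1, K2}"
        obtain z where zK: "z \<in> K" using comp_ne[OF K] by blast
        have zV: "z \<in> V" using comp_sub[OF K] zK by blast
        have zK1: "z \<notin> K1" using comp_disj[OF K K1c zK] nK by blast
        have zK2: "z \<notin> K2" using comp_disj[OF K K2c zK] nK by blast
        have uK: "u \<notin> K" using comp_disj[OF K K1c _ uK1] nK by blast
        have vK: "v \<notin> K" using comp_disj[OF K K2c _ vK2] nK by blast
        have uv': "u \<noteq> v" "u \<noteq> z" "v \<noteq> z" using uK1 vK1 zK1 vK2 zK2 by auto
        have "card K1 = 1" using single[OF K1c, of v z] uv vK1 zV zK1 uv' by blast
        then have e1: "K1 = {u}" using toS[OF K1c _ uK1] by blast
        have "card K2 = 1" using single[OF K2c, of u z] uv uK2 zV zK2 uv' by blast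
        then have e2: "K2 = {v}" using toS[OF K2c _ vK2] by blast
        have "card K = 1" using single[OF K, of u v] uv uK vK uv' by blast
        then have e3: "K = {z}" using toS[OF K _ zK] by blast
        have Mu: "M = {e\<in>E. u \<in> e}" using edges_at K1c e1 by blast
        have Mv: "M = {e\<in>E. v \<in> e}" using edges_at K2c e2 by blast
        have Mz: "M = {e\<in>E. z \<in> e}" using edges_at K e3 by blast
        have "u \<in> e0" "v \<in> e0" "z \<in> e0" using e0 Mu Mv Mz by blast+
        then show False using pq0(1) uv' by auto
      qed
    qed
  qed
  have un: "K1 \<union> K2 = V"
  proof
    show "K1 \<union> K2 \<subseteq> V" using comp_sub[OF K1c] comp_sub[OF K2c] by blast
    show "V \<subseteq> K1 \<union> K2"
    proof
      fix x assume x: "x \<in> V"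
      have "{y. reachable V (E - M) x y} \<in> components V (E - M)" by (rule comp_mem[OF x])
      then have "{y. reachable V (E - M) x y} \<in> {K1, K2}" using comps by simp
      moreover have "x \<in> {y. reachable V (E - M) x y}" using reach_refl[OF x] by simp
      ultimately show "x \<in> K1 \<union> K2" by blast
    qed
  qed
  have fin1: "finite K1" "finite K2" using un finV by (metis finite_Un)+
  have cV: "card V = card K1 + card K2" using card_Un_disjoint[OF fin1 disj12] un by simp
  have VK1: "V - K1 = K2" using un disj12 by blast
  have ne: "card K1 \<noteq> 0" "card K2 \<noteq> 0" using fin1 uK1 vK2 by auto
  have one: "card K1 = 1 \<or> card K2 = 1"
  proof (rule ccontr)
    assume "\<not> (card K1 = 1 \<or> card K2 = 1)"
    then have "2 \<le> card K1" "2 \<le> card (V - K1)" using ne VK1 by auto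
    then show False using MLc[OF ah comp_sub[OF K1c] _ _ crossM[OF K1c]] by blast
  qed
  show ?thesis
  proof (cases "card K1 = 1")
    case True
    then have "card K2 \<noteq> 1" using cV c4 by linarith
    then show ?thesis using comps K12 True by blast
  next
    case False
    then have "card K2 = 1" using one by blast
    moreover have "card K1 \<noteq> 1" using False .
    moreover have "components V (E - M) = {K2, K1}" using comps by blast
    ultimately show ?thesis using K12 by blast
  qed
qed


theorem lemma3p4:
  fixes V :: "'a set" and E :: "'a set set" and w :: 'a
  assumes "almost_hypohamiltonian V E w"
  shows "(\<forall>M. M \<subseteq> E \<and> card M = 3 \<and> \<not> connected_graph V (E - M) \<longrightarrow>
            (\<exists>A1 A2. components V (E - M) = {A1, A2} \<and> A1 \<noteq> A2 \<and>
                     card A1 = 1 \<and> card A2 \<noteq> 1))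
         \<and> cyclically_4_edge_connected V E"
proof (intro conjI allI impI)
  fix M assume "M \<subseteq> E \<and> card M = 3 \<and> \<not> connected_graph V (E - M)"
  then show "\<exists>A1 A2. components V (E - M) = {A1, A2} \<and> A1 \<noteq> A2 \<and> card A1 = 1 \<and> card A2 \<noteq> 1"
    using part1[OF assms] by blast
next
  show "cyclically_4_edge_connected V E" by (rule part2[OF assms])
qed

end
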